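(* Let $A$ be a minimally AP-irreducible sign pattern matrix with all diagonal entries equal to $0$ such that $A[\alpha,\beta]$ contains no $+$ for any two distinct irreducible components $\alpha$ and $\beta$ of $A_+$. Suppose that $Q(A)$ contains an algebraically positive matrix having a simple positive eigenvalue with corresponding entrywise positive left and right eigenvectors. If $X$ is a super-pattern of $A$ such that $x_{ij}\neq a_{ij}$ for precisely one ordered pair $(i,j)$, then $Q(X)$ also contains an algebraically positive matrix having a simple positive eigenvalue with corresponding entrywise positive left and right eigenvectors.
   Context: A sign pattern matrix has entries in $\{+,-,0\}$; its qualitative class $Q(A)$ is the set of real matrices obtained by replacing each $+$ by some positive number, each $-$ by some negative number and each $0$ by $0$. A real square matrix $M$ is algebraically positive if there is a real polynomial $f$ with $f(M)$ entrywise positive. $X$ is a super-pattern of $A$ if $A$ is obtained from $X$ by replacing some (possibly none) nonzero entries with $0$. The digraph $D(M)$ of an $n\times n$ matrix $M$ has vertex set $\{1,\dots,n\}$ and an arc $i\to j$ iff $m_{ij}\neq0$; $M$ is irreducible if $n=1$ or $D(M)$ is strongly connected. For a sign pattern $A$: $A_+$ is obtained by replacing every entry that is not $+$ by $0$; $B_A$ is the sign pattern with $(B_A)_{ij}=+$ if $a_{ij}=+$ or $a_{ji}=-$, and $0$ otherwise. An irreducible sign pattern $A$ is AP-irreducible if every row and every column contains a $+$ and $B_A$ is irreducible; it is minimally AP-irreducible if it is AP-irreducible and does not remain so after replacing any single nonzero entry by $0$. $A[\alpha,\beta]$ is the submatrix with rows in $\alpha$ and columns in $\beta$. The irreducible components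 of a sign pattern $M$ are the vertex sets of the strongly connected components of $D(M)$ (maximal $\alpha$ with $M[\alpha,\alpha]$ irreducible). *)

theory Defs
  imports "Jordan_Normal_Form.Jordan_Normal_Form"
begin

datatype sign = Pos | Neg | Zer

definition qual_class :: "sign mat \<Rightarrow> real mat set" where
  "qual_class A = {M. M \<in> carrier_mat (dim_row A) (dim_col A) \<and>
     (\<forall>i < dim_row A. \<forall>j < dim_col A.
        (A $$ (i,j) = Pos \<longrightarrow> M $$ (i,j) > 0) \<and>
        (A $$ (i,j) = Neg \<longrightarrow> M $$ (i,j) < 0) \<and>
        (A $$ (i,j) = Zer \<longrightarrow> M $$ (i,j) = 0))}"

definition poly_mat :: "real poly \<Rightarrow> real mat \<Rightarrow> real mat" where
  "poly_mat f M = mat (dim_row M) (dim_row M)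
     (\<lambda>(i,j). \<Sum>k\<le>degree f. coeff f k * (M ^\<^sub>m k) $$ (i,j))"

definition alg_positive :: "real mat \<Rightarrow> bool" where
  "alg_positive M \<longleftrightarrow> (\<exists>f. \<forall>i < dim_row M. \<forall>j < dim_row M. poly_mat f M $$ (i,j) > 0)"

definition good_matrix :: "real mat \<Rightarrow> bool" where
  "good_matrix M \<longleftrightarrow> alg_positive M \<and>
     (\<exists>lam > 0. order lam (char_poly M) = 1 \<and>
        (\<exists>v w. eigenvector M v lam \<and> eigenvector (transpose_mat M) w lam \<and>
               (\<forall>i < dim_row M. v $ i > 0 \<and> w $ i > 0)))"

definition arcs :: "sign mat \<Rightarrow> (nat \<times> nat) set" where
  "arcs A = {(i,j). i < dim_row A \<and> j < dim_row A \<and> A $$ (i,j) \<noteq> Zer}"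

definition irreducible_pat :: "sign mat \<Rightarrow> bool" where
  "irreducible_pat A \<longleftrightarrow> dim_row A = 1 \<or>
     (\<forall>i < dim_row A. \<forall>j < dim_row A. (i,j) \<in> (arcs A)\<^sup>*)"

definition pos_part :: "sign mat \<Rightarrow> sign mat" where
  "pos_part A = map_mat (\<lambda>x. if x = Pos then Pos else Zer) A"

definition B_pat :: "sign mat \<Rightarrow> sign mat" where
  "B_pat A = mat (dim_row A) (dim_row A)
     (\<lambda>(i,j). if A $$ (i,j) = Pos \<or> A $$ (j,i) = Neg then Pos else Zer)"

definition AP_irreducible :: "sign mat \<Rightarrow> bool" where
  "AP_irreducible A \<longleftrightarrow> irreducible_pat A \<and>
     (\<forall>i < dim_row A. \<exists>j < dim_row A. A $$ (i,j) = Pos) \<and>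
     (\<forall>j < dim_row A. \<exists>i < dim_row A. A $$ (i,j) = Pos) \<and>
     irreducible_pat (B_pat A)"

definition min_AP_irreducible :: "sign mat \<Rightarrow> bool" where
  "min_AP_irreducible A \<longleftrightarrow> AP_irreducible A \<and>
     (\<forall>i < dim_row A. \<forall>j < dim_row A. A $$ (i,j) \<noteq> Zer \<longrightarrow>
        \<not> AP_irreducible (mat (dim_row A) (dim_row A) (\<lambda>(k,l). if (k,l) = (i,j) then Zer else A $$ (k,l))))"

definition scc_of :: "sign mat \<Rightarrow> nat \<Rightarrow> nat set" where
  "scc_of M i = {j. j < dim_row M \<and> (i,j) \<in> (arcs M)\<^sup>* \<and> (j,i) \<in> (arcs M)\<^sup>*}"

definition irr_components :: "sign mat \<Rightarrow> nat set set" where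
  "irr_components M = scc_of M ` {..<dim_row M}"

definition super_pattern :: "sign mat \<Rightarrow> sign mat \<Rightarrow> bool" where
  "super_pattern X A \<longleftrightarrow> dim_row X = dim_row A \<and> dim_col X = dim_col A \<and>
     (\<forall>i < dim_row A. \<forall>j < dim_col A. X $$ (i,j) = A $$ (i,j) \<or> A $$ (i,j) = Zer)"

end

theory Submission
  imports Defs
begin


lemma det_tendsto:
  fixes B :: "'b \<Rightarrow> real mat"
  assumes B: "\<And>t. B t \<in> carrier_mat n n" and B0: "B0 \<in> carrier_mat n n"
    and lim: "\<And>i j. i < n \<Longrightarrow> j < n \<Longrightarrow> ((\<lambda>t. B t $$ (i,j)) \<longlongrightarrow> B0 $$ (i,j)) F"
  shows "((\<lambda>t. det (B t)) \<longlongrightarrow> det B0) F"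
proof -
  have "((\<lambda>t. \<Sum> p \<in> {p. p permutes {0 ..< n}}. signof p * (\<Prod> i = 0 ..< n. B t $$ (i, p i)))
     \<longlongrightarrow> (\<Sum> p \<in> {p. p permutes {0 ..< n}}. signof p * (\<Prod> i = 0 ..< n. B0 $$ (i, p i)))) F"
  proof (intro tendsto_sum tendsto_mult tendsto_const tendsto_prod)
    fix p i assume p: "p \<in> {p. p permutes {0 ..< n}}" and i: "i \<in> {0..<n}"
    then have "p i < n" by (simp add: permutes_in_image)
    with i show "((\<lambda>t. B t $$ (i, p i)) \<longlongrightarrow> B0 $$ (i, p i)) F" by (intro lim) auto
  qed
  then show ?thesis by (simp add: det_def'[OF B] det_def'[OF B0])
qed

lemma cofactor_tendsto:
  fixes B :: "'b \<Rightarrow> real mat"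
  assumes B: "\<And>t. B t \<in> carrier_mat n n" and B0: "B0 \<in> carrier_mat n n"
    and lim: "\<And>i j. i < n \<Longrightarrow> j < n \<Longrightarrow> ((\<lambda>t. B t $$ (i,j)) \<longlongrightarrow> B0 $$ (i,j)) F"
    and k: "k < n" and l: "l < n"
  shows "((\<lambda>t. cofactor (B t) k l) \<longlongrightarrow> cofactor B0 k l) F"
proof -
  have "((\<lambda>t. det (mat_delete (B t) k l)) \<longlongrightarrow> det (mat_delete B0 k l)) F"
  proof (rule det_tendsto[of _ "n - 1"])
    show "\<And>t. mat_delete (B t) k l \<in> carrier_mat (n - 1) (n - 1)" using B by (rule mat_delete_carrier)
    show "mat_delete B0 k l \<in> carrier_mat (n - 1) (n - 1)" using B0 by (rule mat_delete_carrier)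
    fix i j assume i: "i < n - 1" and j: "j < n - 1"
    show "((\<lambda>t. mat_delete (B t) k l $$ (i, j)) \<longlongrightarrow> mat_delete B0 k l $$ (i, j)) F"
    proof -
      have dB: "dim_row (B t) = n" "dim_col (B t) = n" for t using B[of t] by auto
      have dB0: "dim_row B0 = n" "dim_col B0 = n" using B0 by auto
      show ?thesis using i j unfolding mat_delete_def dB dB0 by (auto intro!: lim)
    qed
  qed
  then show ?thesis unfolding cofactor_def by (intro tendsto_mult tendsto_const)
qed

lemma pow_tendsto:
  fixes B :: "'b \<Rightarrow> real mat"
  assumes B: "\<And>t. B t \<in> carrier_mat n n" and B0: "B0 \<in> carrier_mat n n"
    and lim: "\<And>i j. i < n \<Longrightarrow> j < n \<Longrightarrow> ((\<lambda>t. B t $$ (i,j)) \<longlongrightarrow> B0 $$ (i,j)) F"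
  shows "i < n \<Longrightarrow> j < n \<Longrightarrow> ((\<lambda>t. (B t ^\<^sub>m k) $$ (i,j)) \<longlongrightarrow> (B0 ^\<^sub>m k) $$ (i,j)) F"
proof (induction k arbitrary: i j)
  case 0
  have dB: "dim_row (B t) = n" for t using B[of t] by auto
  have dB0: "dim_row B0 = n" using B0 by auto
  show ?case by (simp add: dB dB0)
next
  case (Suc k)
  have e: "\<And>C. C \<in> carrier_mat n n \<Longrightarrow> (C ^\<^sub>m Suc k) $$ (i,j) = (\<Sum>l<n. (C ^\<^sub>m k) $$ (i,l) * C $$ (l,j))"
    using Suc.prems by (auto simp: index_mult_mat scalar_prod_def row_def col_def intro!: sum.cong)
  show ?case unfolding e[OF B] e[OF B0]
    by (intro tendsto_sum tendsto_mult Suc.IH lim) (use Suc.prems in auto)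
qed



lemma cof_row_prop:
  fixes N :: "real mat"
  assumes N: "N \<in> carrier_mat n n"
    and wN: "\<And>j. j < n \<Longrightarrow> (\<Sum>i<n. w i * N $$ (i,j)) = 0"
    and l: "l < n" and m: "m < n" and k: "k < n"
  shows "w m * cofactor N l k = w l * cofactor N m k"
proof (cases "m = l")
  case True then show ?thesis by simp
next
  case ml: False
  have dN: "dim_row N = n" "dim_col N = n" using N by auto
  define C where "C = mat n n (\<lambda>(i,j). if i = l then (if j = k then 1 else 0) else N $$ (i,j))"
  define D where "D = mat n n (\<lambda>(i,j). if i = m then (if j = k then 1 else 0) else N $$ (i,j))"
  have C: "C \<in> carrier_mat n n" and D: "D \<in> carrier_mat n n" unfolding C_def D_def by auto
  have delC: "mat_delete C l k = mat_delete N l k"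
    by (rule eq_matI) (auto simp: mat_delete_def C_def dN)
  have delD: "mat_delete D m k = mat_delete N m k"
    by (rule eq_matI) (auto simp: mat_delete_def D_def dN)
  have "det C = (\<Sum>j<n. C $$ (l,j) * cofactor C l j)" by (rule laplace_expansion_row[OF C l])
  also have "\<dots> = (\<Sum>j<n. (if j = k then cofactor C l k else 0))"
    by (rule sum.cong) (auto simp: C_def l)
  also have "\<dots> = cofactor N l k" using k by (simp add: cofactor_def delC)
  finally have detC: "det C = cofactor N l k" .
  have "det D = (\<Sum>j<n. D $$ (m,j) * cofactor D m j)" by (rule laplace_expansion_row[OF D m])
  also have "\<dots> = (\<Sum>j<n. (if j = k then cofactor D m k else 0))"
    by (rule sum.cong) (auto simp: D_def m)
  also have "\<dots> = cofactor N m k" using k by (simp add: cofactor_def delD)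
  finally have detD: "det D = cofactor N m k" .
  define Ci where "Ci i = mat n n (\<lambda>(a,j). if a = m then N $$ (i,j) else C $$ (a,j))" for i
  have Ci: "Ci i \<in> carrier_mat n n" for i unfolding Ci_def by auto
  have delCi: "mat_delete (Ci i) m j = mat_delete C m j" for i j
    by (rule eq_matI) (auto simp: mat_delete_def Ci_def C_def)
  have detCi: "det (Ci i) = (\<Sum>j<n. N $$ (i,j) * cofactor C m j)" if i: "i < n" for i
  proof -
    have "det (Ci i) = (\<Sum>j<n. Ci i $$ (m,j) * cofactor (Ci i) m j)" by (rule laplace_expansion_row[OF Ci m])
    also have "\<dots> = (\<Sum>j<n. N $$ (i,j) * cofactor C m j)"
      by (rule sum.cong) (auto simp: cofactor_def delCi, auto simp: Ci_def m)
    finally show ?thesis .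
  qed
  have "(\<Sum>i<n. w i * det (Ci i)) = (\<Sum>i<n. \<Sum>j<n. w i * N $$ (i,j) * cofactor C m j)"
    by (simp add: detCi sum_distrib_left mult.assoc)
  also have "\<dots> = (\<Sum>j<n. (\<Sum>i<n. w i * N $$ (i,j)) * cofactor C m j)"
    by (subst sum.swap) (simp add: sum_distrib_right)
  also have "\<dots> = 0" by (simp add: wN)
  finally have sum0: "(\<Sum>i<n. w i * det (Ci i)) = 0" .
  have Cim: "Ci m = C" by (rule eq_matI) (auto simp: Ci_def C_def ml)
  have Cil: "Ci l = swaprows m l D"
    by (rule eq_matI) (auto simp: Ci_def C_def D_def mat_swaprows_def ml l m)
  have detCil: "det (Ci l) = - det D" unfolding Cil by (rule det_swaprows[OF m l ml D])
  have detCio: "det (Ci i) = 0" if i: "i < n" "i \<noteq> m" "i \<noteq> l" for i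
  proof (rule det_identical_rows[OF Ci _ i(1) m])
    show "i \<noteq> m" using i by auto
    show "row (Ci i) i = row (Ci i) m"
      by (rule eq_vecI) (auto simp: Ci_def C_def row_def i m)
  qed
  have "(\<Sum>i<n. w i * det (Ci i)) = (\<Sum>i<n. (if i = m then w m * det C else 0) + (if i = l then - (w l * det D) else 0))"
    by (rule sum.cong) (auto simp: Cim detCil detCio ml)
  also have "\<dots> = w m * det C - w l * det D" using l m by (simp add: sum.distrib)
  finally show ?thesis using sum0 detC detD by simp
qed

lemma cofactor_transpose:
  fixes N :: "real mat"
  assumes N: "N \<in> carrier_mat n n"
  shows "cofactor (transpose_mat N) a b = cofactor N b a"
proof -
  have "mat_delete (transpose_mat N) a b = transpose_mat (mat_delete N b a)"
    using N by (intro eq_matI) (auto simp: mat_delete_def)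
  moreover have "det (transpose_mat (mat_delete N b a)) = det (mat_delete N b a)"
    by (rule det_transpose[OF mat_delete_carrier[OF N]])
  ultimately show ?thesis unfolding cofactor_def by (simp add: add.commute)
qed

lemma cof_col_prop:
  fixes N :: "real mat"
  assumes N: "N \<in> carrier_mat n n"
    and Nv: "\<And>i. i < n \<Longrightarrow> (\<Sum>j<n. N $$ (i,j) * v j) = 0"
    and l: "l < n" and m: "m < n" and k: "k < n"
  shows "v m * cofactor N k l = v l * cofactor N k m"
proof -
  have NT: "transpose_mat N \<in> carrier_mat n n" using N by auto
  have "v m * cofactor (transpose_mat N) l k = v l * cofactor (transpose_mat N) m k"
  proof (rule cof_row_prop[OF NT _ l m k])
    fix j assume j: "j < n"
    have "(\<Sum>i<n. v i * transpose_mat N $$ (i, j)) = (\<Sum>i<n. N $$ (j,i) * v i)"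
      using N j by (intro sum.cong) auto
    then show "(\<Sum>i<n. v i * transpose_mat N $$ (i, j)) = 0" using Nv[OF j] by simp
  qed
  then show ?thesis by (simp add: cofactor_transpose[OF N])
qed

lemma adj_rank1:
  fixes N :: "real mat"
  assumes N: "N \<in> carrier_mat n n"
    and Nv: "\<And>i. i < n \<Longrightarrow> (\<Sum>j<n. N $$ (i,j) * v j) = 0"
    and wN: "\<And>j. j < n \<Longrightarrow> (\<Sum>i<n. w i * N $$ (i,j)) = 0"
    and v0: "v 0 \<noteq> 0" and w0: "w 0 \<noteq> 0" and n: "0 < n"
  shows "\<exists>c. \<forall>k<n. \<forall>l<n. cofactor N l k = c * v k * w l"
proof (intro exI allI impI)
  fix k l assume k: "k < n" and l: "l < n"
  have 1: "w 0 * cofactor N l k = w l * cofactor N 0 k" by (rule cof_row_prop[OF N wN l n k])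
  have 2: "v 0 * cofactor N 0 k = v k * cofactor N 0 0" by (rule cof_col_prop[OF N Nv k n n])
  from 1 have "cofactor N l k = w l * cofactor N 0 k / w 0" using w0 by (simp add: field_simps)
  also have "cofactor N 0 k = v k * cofactor N 0 0 / v 0" using 2 v0 by (simp add: field_simps)
  finally show "cofactor N l k = cofactor N 0 0 / (v 0 * w 0) * v k * w l"
    using v0 w0 by (simp add: field_simps)
qed


definition xmat :: "nat \<Rightarrow> real \<Rightarrow> real mat \<Rightarrow> real mat" where
  "xmat n x B = mat n n (\<lambda>(i,j). (if i = j then x else 0) - B $$ (i,j))"




lemma poly_char_poly_det:
  fixes B :: "real mat"
  assumes B: "B \<in> carrier_mat n n"
  shows "poly (char_poly B) x = det (xmat n x B)"
  unfolding char_poly_def xmat_def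
  by (rule poly_det_cong[of _ n], insert B, auto simp: char_poly_matrix_def)

lemma char_poly_nonzero:
  fixes B :: "real mat"
  assumes B: "B \<in> carrier_mat n n"
  shows "char_poly B \<noteq> 0"
  using degree_monic_char_poly[OF B] by auto

lemma poly_pderiv_char_poly:
  fixes B :: "real mat"
  assumes B: "B \<in> carrier_mat n n"
  shows "poly (pderiv (char_poly B)) x = (\<Sum>i<n. cofactor (xmat n x B) i i)"
proof -
  have "poly (pderiv (char_poly B)) x = (\<Sum>i<n. poly (char_poly (mat_delete B i i)) x)"
    by (simp add: pderiv_char_poly[OF B] poly_sum)
  also have "\<dots> = (\<Sum>i<n. cofactor (xmat n x B) i i)"
  proof (rule sum.cong[OF refl])
    fix i assume i: "i \<in> {..<n}"
    have "poly (char_poly (mat_delete B i i)) x = det (xmat (n-1) x (mat_delete B i i))"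
      by (rule poly_char_poly_det[OF mat_delete_carrier[OF B]])
    also have "xmat (n-1) x (mat_delete B i i) = mat_delete (xmat n x B) i i"
      using B i by (intro eq_matI) (auto simp: xmat_def mat_delete_def)
    finally show "poly (char_poly (mat_delete B i i)) x = cofactor (xmat n x B) i i"
      by (simp add: cofactor_def)
  qed
  finally show ?thesis .
qed

lemma order_one_iff:
  fixes p :: "real poly"
  assumes p: "p \<noteq> 0"
  shows "order x p = 1 \<longleftrightarrow> poly p x = 0 \<and> poly (pderiv p) x \<noteq> 0"
proof
  assume o: "order x p = 1"
  then have r: "poly p x = 0" using p order_root by fastforce
  have "order x p = Suc (order x (pderiv p))" by (rule order_pderiv[OF p r])
  then have o0: "order x (pderiv p) = 0" using o by simp
  have "pderiv p \<noteq> 0"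
  proof
    assume "pderiv p = 0"
    then obtain h where "p = [:h:]" using pderiv_iszero by blast
    then show False using r p by auto
  qed
  then show "poly p x = 0 \<and> poly (pderiv p) x \<noteq> 0" using r o0 order_root by blast
next
  assume r: "poly p x = 0 \<and> poly (pderiv p) x \<noteq> 0"
  then have "order x (pderiv p) = 0" by (simp add: order_0I)
  then show "order x p = 1" using order_pderiv[OF p] r by simp
qed




lemma mult_mat_vec_index:
  fixes B :: "real mat"
  assumes "B \<in> carrier_mat n n" "u \<in> carrier_vec n" "i < n"
  shows "(B *\<^sub>v u) $ i = (\<Sum>k<n. B $$ (i,k) * u $ k)"
  using assms by (auto simp: scalar_prod_def row_def atLeast0LessThan intro!: sum.cong)

lemma null_to_eig:
  fixes B :: "real mat"
  assumes B: "B \<in> carrier_mat n n" and u: "u \<in> carrier_vec n"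
    and nul: "\<And>i. i < n \<Longrightarrow> (\<Sum>k<n. xmat n x B $$ (i,k) * u $ k) = 0"
  shows "B *\<^sub>v u = x \<cdot>\<^sub>v u"
proof (rule eq_vecI)
  show "dim_vec (B *\<^sub>v u) = dim_vec (x \<cdot>\<^sub>v u)" using B u by auto
  fix i assume "i < dim_vec (x \<cdot>\<^sub>v u)"
  then have i: "i < n" using u by auto
  have "(\<Sum>k<n. xmat n x B $$ (i,k) * u $ k) = (\<Sum>k<n. (if i = k then x * u $ k else 0) - B $$ (i,k) * u $ k)"
    using i by (intro sum.cong) (auto simp: xmat_def algebra_simps)
  also have "\<dots> = x * u $ i - (\<Sum>k<n. B $$ (i,k) * u $ k)" using i by (simp add: sum_subtractf)
  finally show "(B *\<^sub>v u) $ i = (x \<cdot>\<^sub>v u) $ i"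
    using nul[OF i] mult_mat_vec_index[OF B u i] i u by simp
qed

lemma null_to_eig_left:
  fixes B :: "real mat"
  assumes B: "B \<in> carrier_mat n n" and u: "u \<in> carrier_vec n"
    and nul: "\<And>j. j < n \<Longrightarrow> (\<Sum>k<n. u $ k * xmat n x B $$ (k,j)) = 0"
  shows "transpose_mat B *\<^sub>v u = x \<cdot>\<^sub>v u"
proof (rule null_to_eig)
  show "transpose_mat B \<in> carrier_mat n n" using B by auto
  show "u \<in> carrier_vec n" by fact
  fix i assume i: "i < n"
  have "(\<Sum>k<n. xmat n x (transpose_mat B) $$ (i,k) * u $ k) = (\<Sum>k<n. u $ k * xmat n x B $$ (k,i))"
    using B i by (intro sum.cong) (auto simp: xmat_def)
  then show "(\<Sum>k<n. xmat n x (transpose_mat B) $$ (i,k) * u $ k) = 0" using nul[OF i] by simp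
qed

lemma adj_null_right:
  fixes N :: "real mat"
  assumes N: "N \<in> carrier_mat n n" and d: "det N = 0" and i: "i < n" and l: "l < n"
  shows "(\<Sum>k<n. N $$ (i,k) * cofactor N l k) = 0"
proof -
  have "(N * adj_mat N) $$ (i,l) = 0" using adj_mat(2)[OF N] d i l by simp
  moreover have "(N * adj_mat N) $$ (i,l) = (\<Sum>k<n. N $$ (i,k) * cofactor N l k)"
    using N i l by (auto simp: adj_mat_def scalar_prod_def row_def col_def atLeast0LessThan intro!: sum.cong)
  ultimately show ?thesis by simp
qed

lemma adj_null_left:
  fixes N :: "real mat"
  assumes N: "N \<in> carrier_mat n n" and d: "det N = 0" and j: "j < n" and l: "l < n"
  shows "(\<Sum>k<n. cofactor N k l * N $$ (k,j)) = 0"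
proof -
  have "(adj_mat N * N) $$ (l,j) = 0" using adj_mat(3)[OF N] d j l by simp
  moreover have "(adj_mat N * N) $$ (l,j) = (\<Sum>k<n. cofactor N k l * N $$ (k,j))"
    using N j l by (auto simp: adj_mat_def scalar_prod_def row_def col_def atLeast0LessThan intro!: sum.cong)
  ultimately show ?thesis by simp
qed

theorem lemma3p12:
  fixes A X :: "sign mat" and n :: nat
  assumes "A \<in> carrier_mat n n"
    and "min_AP_irreducible A"
    and "\<forall>i < n. A $$ (i,i) = Zer"
    and "\<forall>\<alpha> \<in> irr_components (pos_part A). \<forall>\<beta> \<in> irr_components (pos_part A).
           \<alpha> \<noteq> \<beta> \<longrightarrow> (\<forall>i \<in> \<alpha>. \<forall>j \<in> \<beta>. A $$ (i,j) \<noteq> Pos)"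
    and "\<exists>M \<in> qual_class A. good_matrix M"
    and "super_pattern X A"
    and "\<exists>!p. p \<in> {..<n} \<times> {..<n} \<and> X $$ p \<noteq> A $$ p"
  shows "\<exists>M \<in> qual_class X. good_matrix M"
proof -
  note Acar = assms(1)
  have dA: "dim_row A = n" "dim_col A = n" using Acar by auto
  obtain M where MQ: "M \<in> qual_class A" and Mg: "good_matrix M" using assms(5) by blast
  have M: "M \<in> carrier_mat n n" using MQ dA by (simp add: qual_class_def)
  have dM: "dim_row M = n" "dim_col M = n" using M by auto
  have Msign: "\<And>i j. i < n \<Longrightarrow> j < n \<Longrightarrow>
        (A $$ (i,j) = Pos \<longrightarrow> M $$ (i,j) > 0) \<and>
        (A $$ (i,j) = Neg \<longrightarrow> M $$ (i,j) < 0) \<and>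
        (A $$ (i,j) = Zer \<longrightarrow> M $$ (i,j) = 0)"
    using MQ dA by (simp add: qual_class_def)
  from assms(7) obtain p where p: "p \<in> {..<n} \<times> {..<n} \<and> X $$ p \<noteq> A $$ p"
    and pu: "\<And>q. q \<in> {..<n} \<times> {..<n} \<and> X $$ q \<noteq> A $$ q \<Longrightarrow> q = p"
    by (rule ex1E) blast
  obtain i0 j0 where pij: "p = (i0,j0)" by (cases p)
  have p0: "i0 < n" "j0 < n" "X $$ (i0,j0) \<noteq> A $$ (i0,j0)" using p pij by auto
  have p0u: "i = i0 \<and> j = j0" if "i < n" "j < n" "X $$ (i,j) \<noteq> A $$ (i,j)" for i j
    using pu[of "(i,j)"] that pij by auto
  have n0: "0 < n" using p0 by auto
  have dX: "dim_row X = n" "dim_col X = n" using assms(6) dA by (auto simp: super_pattern_def)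
  have A0: "A $$ (i0,j0) = Zer" using assms(6) p0 dA by (auto simp: super_pattern_def)
  have X0: "X $$ (i0,j0) \<noteq> Zer" using p0 A0 by simp
  have M0: "M $$ (i0,j0) = 0" using Msign[OF p0(1,2)] A0 by simp
  define \<sigma> :: real where "\<sigma> = (if X $$ (i0,j0) = Pos then 1 else -1)"
  define Me where "Me \<epsilon> = mat n n (\<lambda>(i,j). M $$ (i,j) + (if i = i0 \<and> j = j0 then \<epsilon> * \<sigma> else 0))" for \<epsilon> :: real
  have Me: "Me \<epsilon> \<in> carrier_mat n n" for \<epsilon> unfolding Me_def by auto
  have Me0: "Me 0 = M" using M unfolding Me_def by (intro eq_matI) auto
  from Mg obtain f where f: "\<And>i j. i < n \<Longrightarrow> j < n \<Longrightarrow> poly_mat f M $$ (i,j) > 0"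
    unfolding good_matrix_def alg_positive_def dM by blast
  from Mg obtain lam v w where lam: "lam > 0" and ord: "order lam (char_poly M) = 1"
    and ev: "eigenvector M v lam" and ew: "eigenvector (transpose_mat M) w lam"
    and vw: "\<And>i. i < n \<Longrightarrow> v $ i > 0 \<and> w $ i > 0"
    unfolding good_matrix_def dM by blast
  have v: "v \<in> carrier_vec n" and Mv: "M *\<^sub>v v = lam \<cdot>\<^sub>v v" using ev dM by (auto simp: eigenvector_def)
  have w: "w \<in> carrier_vec n" and Mw: "transpose_mat M *\<^sub>v w = lam \<cdot>\<^sub>v w" using ew dM by (auto simp: eigenvector_def)
  define N0 where "N0 = xmat n lam M"
  have N0: "N0 \<in> carrier_mat n n" unfolding N0_def xmat_def by auto
  have Nv: "(\<Sum>j<n. N0 $$ (i,j) * v $ j) = 0" if i: "i < n" for i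
  proof -
    have "(\<Sum>j<n. N0 $$ (i,j) * v $ j) = (\<Sum>j<n. (if i = j then lam * v $ j else 0) - M $$ (i,j) * v $ j)"
      using i by (intro sum.cong) (auto simp: N0_def xmat_def algebra_simps)
    also have "\<dots> = lam * v $ i - (M *\<^sub>v v) $ i" using i by (simp add: sum_subtractf mult_mat_vec_index[OF M v i])
    also have "\<dots> = 0" using Mv i v by simp
    finally show ?thesis .
  qed
  have wN: "(\<Sum>i<n. w $ i * N0 $$ (i,j)) = 0" if j: "j < n" for j
  proof -
    have MT: "transpose_mat M \<in> carrier_mat n n" using M by auto
    have "(\<Sum>i<n. w $ i * N0 $$ (i,j)) = (\<Sum>i<n. (if j = i then lam * w $ i else 0) - transpose_mat M $$ (j,i) * w $ i)"
      using j M by (intro sum.cong) (auto simp: N0_def xmat_def algebra_simps)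
    also have "\<dots> = lam * w $ j - (transpose_mat M *\<^sub>v w) $ j" using j by (simp add: sum_subtractf mult_mat_vec_index[OF MT w j])
    also have "\<dots> = 0" using Mw j w by simp
    finally show ?thesis .
  qed
  obtain c where c: "\<And>k l. k < n \<Longrightarrow> l < n \<Longrightarrow> cofactor N0 l k = c * v $ k * w $ l"
    using adj_rank1[OF N0, of "\<lambda>j. v $ j" "\<lambda>i. w $ i"] Nv wN vw[OF n0] n0 by force
  have cpM: "char_poly M \<noteq> 0" by (rule char_poly_nonzero[OF M])
  have rootM: "poly (char_poly M) lam = 0" and derM: "poly (pderiv (char_poly M)) lam \<noteq> 0"
    using ord order_one_iff[OF cpM] by auto
  have trace0: "(\<Sum>i<n. cofactor N0 i i) \<noteq> 0"
    using derM poly_pderiv_char_poly[OF M] by (simp add: N0_def)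
  have cnz: "c \<noteq> 0"
  proof
    assume "c = 0"
    then have "(\<Sum>i<n. cofactor N0 i i) = 0" by (simp add: c)
    then show False using trace0 by simp
  qed
  define P where "P t = xmat n (snd t) (Me (fst t))" for t :: "real \<times> real"
  define t0 where "t0 = (0::real, lam)"
  have P: "P t \<in> carrier_mat n n" for t unfolding P_def xmat_def by auto
  have Pt0: "P t0 = N0" unfolding P_def t0_def N0_def by (simp add: Me0)
  have fstlim: "((\<lambda>t. fst t) \<longlongrightarrow> fst t0) (nhds t0)" by (rule tendsto_fst[OF filterlim_ident])
  have sndlim: "((\<lambda>t. snd t) \<longlongrightarrow> snd t0) (nhds t0)" by (rule tendsto_snd[OF filterlim_ident])
  have Plim: "((\<lambda>t. P t $$ (i,j)) \<longlongrightarrow> P t0 $$ (i,j)) (nhds t0)" if "i < n" "j < n" for i j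
    using that unfolding P_def xmat_def Me_def
    by (auto intro!: tendsto_intros fstlim sndlim)
  have Melim: "((\<lambda>t. Me (fst t) $$ (i,j)) \<longlongrightarrow> Me (fst t0) $$ (i,j)) (nhds t0)" if "i < n" "j < n" for i j
    using that unfolding Me_def
    by (auto intro!: tendsto_intros fstlim)
  have cofl: "((\<lambda>t. cofactor (P t) i j) \<longlongrightarrow> cofactor N0 i j) (nhds t0)" if "i < n" "j < n" for i j
    using cofactor_tendsto[OF P P Plim that] Pt0 by simp
  have E1: "\<forall>\<^sub>F t in nhds t0. \<forall>i\<in>{..<n}. \<forall>j\<in>{..<n}. 0 < c * cofactor (P t) i j"
  proof (intro eventually_ball_finite ballI finite_lessThan)
    fix i j assume i: "i \<in> {..<n}" and j: "j \<in> {..<n}"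
    have "((\<lambda>t. c * cofactor (P t) i j) \<longlongrightarrow> c * cofactor N0 i j) (nhds t0)"
      using i j by (intro tendsto_intros cofl) auto
    moreover have "0 < c * cofactor N0 i j"
    proof -
      have "c * cofactor N0 i j = (c * c) * (v $ j * w $ i)" using i j c by simp
      moreover have "0 < c * c" using cnz not_real_square_gt_zero by blast
      moreover have "0 < v $ j * w $ i" using vw i j by simp
      ultimately show ?thesis by (metis mult_pos_pos)
    qed
    ultimately show "\<forall>\<^sub>F t in nhds t0. 0 < c * cofactor (P t) i j" by (rule order_tendstoD(1))
  qed
  have E2: "\<forall>\<^sub>F t in nhds t0. (\<Sum>i<n. cofactor (P t) i i) \<noteq> 0"
  proof (rule tendsto_imp_eventually_ne[OF _ trace0])
    show "((\<lambda>t. \<Sum>i<n. cofactor (P t) i i) \<longlongrightarrow> (\<Sum>i<n. cofactor N0 i i)) (nhds t0)"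
      by (intro tendsto_sum cofl) auto
  qed
  have E3: "\<forall>\<^sub>F t in nhds t0. \<forall>i\<in>{..<n}. \<forall>j\<in>{..<n}. 0 < poly_mat f (Me (fst t)) $$ (i,j)"
  proof (intro eventually_ball_finite ballI finite_lessThan)
    fix i j assume i: "i \<in> {..<n}" and j: "j \<in> {..<n}"
    have pm: "poly_mat f B $$ (i,j) = (\<Sum>k\<le>degree f. coeff f k * (B ^\<^sub>m k) $$ (i,j))" if "B \<in> carrier_mat n n" for B
      using that i j by (auto simp: poly_mat_def)
    have "((\<lambda>t. poly_mat f (Me (fst t)) $$ (i,j)) \<longlongrightarrow> poly_mat f (Me (fst t0)) $$ (i,j)) (nhds t0)"
      unfolding pm[OF Me]
      by (intro tendsto_intros pow_tendsto[OF Me Me Melim]) (use i j in auto)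
    moreover have "0 < poly_mat f (Me (fst t0)) $$ (i,j)" using f i j by (simp add: t0_def Me0)
    ultimately show "\<forall>\<^sub>F t in nhds t0. 0 < poly_mat f (Me (fst t)) $$ (i,j)" by (rule order_tendstoD(1))
  qed
  define Good where "Good t \<longleftrightarrow> (\<forall>i\<in>{..<n}. \<forall>j\<in>{..<n}. 0 < c * cofactor (P t) i j) \<and>
      (\<Sum>i<n. cofactor (P t) i i) \<noteq> 0 \<and> (\<forall>i\<in>{..<n}. \<forall>j\<in>{..<n}. 0 < poly_mat f (Me (fst t)) $$ (i,j))" for t
  have "\<forall>\<^sub>F t in nhds t0. Good t" unfolding Good_def by (intro eventually_conj E1 E2 E3)
  then have "\<forall>\<^sub>F t in nhds (0::real) \<times>\<^sub>F nhds lam. Good t" by (simp add: t0_def nhds_prod)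
  then obtain Pf Pg where Pf: "\<forall>\<^sub>F e in nhds (0::real). Pf e" and Pg: "\<forall>\<^sub>F x in nhds lam. Pg x"
    and PfPg: "\<And>e x. Pf e \<Longrightarrow> Pg x \<Longrightarrow> Good (e, x)"
    unfolding eventually_prod_filter by blast
  obtain d where d: "d > 0" and dPg: "\<And>x. dist x lam < d \<Longrightarrow> Pg x"
    using Pg unfolding eventually_nhds_metric by blast
  define D where "D = poly (pderiv (char_poly M)) lam"
  define q where "q x = D * poly (char_poly M) x" for x
  have "(q has_real_derivative D * D) (at lam)"
    unfolding q_def D_def by (intro DERIV_cmult poly_DERIV)
  moreover have DD: "D * D > 0" using derM not_real_square_gt_zero unfolding D_def by blast
  ultimately obtain d1 d2 where d1: "d1 > 0" "\<And>h. h > 0 \<Longrightarrow> h < d1 \<Longrightarrow> q lam < q (lam + h)"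
    and d2: "d2 > 0" "\<And>h. h > 0 \<Longrightarrow> h < d2 \<Longrightarrow> q (lam - h) < q lam"
    using DERIV_pos_inc_right DERIV_pos_inc_left by metis
  define \<delta> where "\<delta> = min (min d d1) (min d2 lam) / 2"
  have \<delta>: "\<delta> > 0" "\<delta> < d" "\<delta> < d1" "\<delta> < d2" "\<delta> < lam" using d d1 d2 lam by (auto simp: \<delta>_def)
  have qlam: "q lam = 0" using rootM by (simp add: q_def)
  have "q (lam - \<delta>) * q (lam + \<delta>) < 0"
    using d1(2)[of \<delta>] d2(2)[of \<delta>] \<delta> qlam by (simp add: mult_neg_pos)
  moreover have "q (lam - \<delta>) * q (lam + \<delta>) = (D * D) * (poly (char_poly M) (lam - \<delta>) * poly (char_poly M) (lam + \<delta>))"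
    by (simp add: q_def algebra_simps)
  ultimately have sc: "poly (char_poly M) (lam - \<delta>) * poly (char_poly M) (lam + \<delta>) < 0"
    using DD by (simp add: mult_less_0_iff)
  define h where "h e = det (xmat n (lam - \<delta>) (Me e)) * det (xmat n (lam + \<delta>) (Me e))" for e
  have xlim: "((\<lambda>e. xmat n y (Me e) $$ (i,j)) \<longlongrightarrow> xmat n y (Me 0) $$ (i,j)) (nhds 0)" if "i < n" "j < n" for y i j
    using that unfolding xmat_def Me_def by (auto intro!: tendsto_eq_intros filterlim_ident)
  have xcar: "xmat n y B \<in> carrier_mat n n" for y B unfolding xmat_def by auto
  have "(h \<longlongrightarrow> h 0) (nhds 0)" unfolding h_def
    by (intro tendsto_mult det_tendsto[OF xcar xcar xlim])
  moreover have "h 0 < 0" using sc by (simp add: h_def Me0 poly_char_poly_det[OF M])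
  ultimately have "\<forall>\<^sub>F e in nhds 0. h e < 0" by (rule order_tendstoD(2))
  with Pf have "\<forall>\<^sub>F e in nhds (0::real). Pf e \<and> h e < 0" by (rule eventually_conj)
  then obtain e0 where e0: "e0 > 0" and e0P: "\<And>e. dist e 0 < e0 \<Longrightarrow> Pf e \<and> h e < 0"
    unfolding eventually_nhds_metric by blast
  define \<epsilon> where "\<epsilon> = e0 / 2"
  have \<epsilon>: "\<epsilon> > 0" "Pf \<epsilon>" "h \<epsilon> < 0" using e0 e0P[of \<epsilon>] by (auto simp: \<epsilon>_def)
  have "poly (char_poly (Me \<epsilon>)) (lam - \<delta>) * poly (char_poly (Me \<epsilon>)) (lam + \<delta>) < 0"
    using \<epsilon>(3) by (simp add: h_def poly_char_poly_det[OF Me])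
  then obtain x where x: "x > lam - \<delta>" "x < lam + \<delta>" and rx: "poly (char_poly (Me \<epsilon>)) x = 0"
    using poly_IVT[of "lam - \<delta>" "lam + \<delta>"] \<delta> by auto
  have "Pg x" using x \<delta> by (intro dPg) (auto simp: dist_real_def)
  then have G: "Good (\<epsilon>, x)" using PfPg \<epsilon>(2) by blast
  define M' where "M' = Me \<epsilon>"
  define N where "N = P (\<epsilon>, x)"
  have M': "M' \<in> carrier_mat n n" unfolding M'_def by (rule Me)
  have dM': "dim_row M' = n" "dim_col M' = n" using M' by auto
  have N: "N \<in> carrier_mat n n" unfolding N_def by (rule P)
  have NM': "N = xmat n x M'" unfolding N_def P_def M'_def by simp
  have detN: "det N = 0" using rx by (simp add: NM' M'_def poly_char_poly_det[OF Me])
  have G1: "\<And>i j. i < n \<Longrightarrow> j < n \<Longrightarrow> 0 < c * cofactor N i j" using G by (auto simp: Good_def N_def)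
  have G2: "(\<Sum>i<n. cofactor N i i) \<noteq> 0" using G by (auto simp: Good_def N_def)
  have G3: "\<And>i j. i < n \<Longrightarrow> j < n \<Longrightarrow> 0 < poly_mat f M' $$ (i,j)" using G by (auto simp: Good_def M'_def)
  have xpos: "x > 0" using x \<delta> by simp
  define u where "u = vec n (\<lambda>k. c * cofactor N 0 k)"
  define u' where "u' = vec n (\<lambda>k. c * cofactor N k 0)"
  have u: "u \<in> carrier_vec n" and u': "u' \<in> carrier_vec n" unfolding u_def u'_def by auto
  have Mu: "M' *\<^sub>v u = x \<cdot>\<^sub>v u"
  proof (rule null_to_eig[OF M' u])
    fix i assume i: "i < n"
    have "(\<Sum>k<n. xmat n x M' $$ (i,k) * u $ k) = c * (\<Sum>k<n. N $$ (i,k) * cofactor N 0 k)"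
      by (simp add: u_def NM' sum_distrib_left algebra_simps)
    also have "\<dots> = 0" using adj_null_right[OF N detN i n0] by simp
    finally show "(\<Sum>k<n. xmat n x M' $$ (i,k) * u $ k) = 0" .
  qed
  have Mu': "transpose_mat M' *\<^sub>v u' = x \<cdot>\<^sub>v u'"
  proof (rule null_to_eig_left[OF M' u'])
    fix j assume j: "j < n"
    have "(\<Sum>k<n. u' $ k * xmat n x M' $$ (k,j)) = c * (\<Sum>k<n. cofactor N k 0 * N $$ (k,j))"
      by (simp add: u'_def NM' sum_distrib_left algebra_simps)
    also have "\<dots> = 0" using adj_null_left[OF N detN j n0] by simp
    finally show "(\<Sum>k<n. u' $ k * xmat n x M' $$ (k,j)) = 0" .
  qed
  have upos: "\<And>i. i < n \<Longrightarrow> u $ i > 0 \<and> u' $ i > 0" using G1 n0 by (auto simp: u_def u'_def)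
  have unz: "u \<noteq> 0\<^sub>v n" using upos[OF n0] n0 by (metis index_zero_vec(1) less_irrefl)
  have u'nz: "u' \<noteq> 0\<^sub>v n" using upos[OF n0] n0 by (metis index_zero_vec(1) less_irrefl)
  have cpM': "char_poly M' \<noteq> 0" by (rule char_poly_nonzero[OF M'])
  have ordM': "order x (char_poly M') = 1"
    unfolding order_one_iff[OF cpM']
    using rx G2 poly_pderiv_char_poly[OF M', of x] by (simp add: M'_def NM')
  have good: "good_matrix M'"
    unfolding good_matrix_def alg_positive_def dM'
  proof (intro conjI exI allI impI)
    show "\<And>i j. i < n \<Longrightarrow> j < n \<Longrightarrow> 0 < poly_mat f M' $$ (i,j)" by (rule G3)
    show "0 < x" by (rule xpos)
    show "order x (char_poly M') = 1" by (rule ordM')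
    show "eigenvector M' u x" unfolding eigenvector_def dM' using u unz Mu by auto
    show "eigenvector (transpose_mat M') u' x" unfolding eigenvector_def using u' u'nz Mu' dM' by auto
    show "\<And>i. i < n \<Longrightarrow> 0 < u $ i" using upos by auto
    show "\<And>i. i < n \<Longrightarrow> 0 < u' $ i" using upos by auto
  qed
  have qcs: "\<forall>i<n. \<forall>j<n. (X $$ (i,j) = Pos \<longrightarrow> M' $$ (i,j) > 0) \<and>
        (X $$ (i,j) = Neg \<longrightarrow> M' $$ (i,j) < 0) \<and> (X $$ (i,j) = Zer \<longrightarrow> M' $$ (i,j) = 0)"
  proof (intro allI impI)
    fix i j assume i: "i < n" and j: "j < n"
    show "(X $$ (i,j) = Pos \<longrightarrow> M' $$ (i,j) > 0) \<and>
        (X $$ (i,j) = Neg \<longrightarrow> M' $$ (i,j) < 0) \<and> (X $$ (i,j) = Zer \<longrightarrow> M' $$ (i,j) = 0)"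
    proof (cases "i = i0 \<and> j = j0")
      case True
      then show ?thesis using i j M0 X0 \<epsilon>(1) by (auto simp: M'_def Me_def \<sigma>_def)
    next
      case False
      then have XA: "X $$ (i,j) = A $$ (i,j)" using p0u[OF i j] by blast
      have Mij: "M' $$ (i,j) = M $$ (i,j)" using False i j by (auto simp: M'_def Me_def)
      show ?thesis using Msign[OF i j] XA Mij by auto
    qed
  qed
  have qc: "M' \<in> qual_class X" unfolding qual_class_def dX using M' qcs by blast
  show ?thesis using qc good by blast
qed

end
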